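(* Consider the second-order Kuramoto model with bonding force $$\dot\theta_i=\omega_i,\qquad \dot\omega_i=\frac{1}{N}\sum_{j=1}^N\big[\kappa_0\cos(\theta_j-\theta_i)+\kappa_1\big](\omega_j-\omega_i)+\frac{\kappa_2}{N}\sum_{j=1}^N\big[|\theta_j-\theta_i|-\theta^\infty_{ij}\big]\operatorname{sgn}(\theta_j-\theta_i),\quad i\in[N].$$ Suppose $(\Theta^0,W^0)\in\mathcal{S}$, $\mathcal{E}(0)<\frac{\kappa_2(\min_{i\ne j}\theta^\infty_{ij})^2}{2N}$, $\kappa_0\cos\mathcal{U}+\kappa_1>0$, $\kappa_2>0$, $\sum_{i=1}^N\omega_i^0=0$, and let $\{(\theta_i,\omega_i)\}$ be a global smooth solution. Then there exists a nonnegative constant $\mathcal{E}^\infty$ such that $$\lim_{t\to\infty}\mathcal{E}_k(t)=0,\qquad \lim_{t\to\infty}\mathcal{E}_p(t)=\mathcal{E}^\infty,\qquad \lim_{t\to\infty}\mathcal{E}(t)=\mathcal{E}^\infty.$$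
   Context: $N\ge2$, $\kappa_0,\kappa_1\ge0$; $[\theta^\infty_{ij}]$ real symmetric with zero diagonal; $\operatorname{sgn}$ the sign function; $\omega_i^0=\omega_i(0)$. Kinetic energy $\mathcal{E}_k:=\frac12\sum_i|\omega_i|^2$, potential energy $\mathcal{E}_p:=\frac{\kappa_2}{4N}\sum_{i,j}(|\theta_j-\theta_i|-\theta^\infty_{ij})^2$, total energy $\mathcal{E}:=\mathcal{E}_k+\mathcal{E}_p$. $\mathcal{U}:=\max_{i\ne j}\theta^\infty_{ij}+\sqrt{2N\mathcal{E}(0)/\kappa_2}$; $\mathcal{S}:=\{(\Theta,W)\in\mathbb{R}^{2N}:|\theta_i-\theta_j|<\mathcal{U}<\pi\ \forall i,j\}$. *)

theory Defs
  imports "HOL-Analysis.Analysis"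
begin

text \<open>Oscillators are indexed by 0..<N. A state is given by phases and frequencies
  as functions of type nat => real.\<close>

definition kin_energy :: "nat \<Rightarrow> (nat \<Rightarrow> real) \<Rightarrow> real" where
  "kin_energy N w = (1/2) * (\<Sum>i<N. (w i)\<^sup>2)"

definition pot_energy :: "nat \<Rightarrow> real \<Rightarrow> (nat \<Rightarrow> nat \<Rightarrow> real) \<Rightarrow> (nat \<Rightarrow> real) \<Rightarrow> real" where
  "pot_energy N k2 thinf th =
     k2 / (4 * real N) * (\<Sum>i<N. \<Sum>j<N. (\<bar>th j - th i\<bar> - thinf i j)\<^sup>2)"

definition tot_energy :: "nat \<Rightarrow> real \<Rightarrow> (nat \<Rightarrow> nat \<Rightarrow> real) \<Rightarrow> (nat \<Rightarrow> real) \<Rightarrow> (nat \<Rightarrow> real) \<Rightarrow> real" where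
  "tot_energy N k2 thinf th w = kin_energy N w + pot_energy N k2 thinf th"

definition max_offdiag :: "nat \<Rightarrow> (nat \<Rightarrow> nat \<Rightarrow> real) \<Rightarrow> real" where
  "max_offdiag N thinf = Max {thinf i j | i j. i < N \<and> j < N \<and> i \<noteq> j}"

definition min_offdiag :: "nat \<Rightarrow> (nat \<Rightarrow> nat \<Rightarrow> real) \<Rightarrow> real" where
  "min_offdiag N thinf = Min {thinf i j | i j. i < N \<and> j < N \<and> i \<noteq> j}"

definition U_const :: "nat \<Rightarrow> real \<Rightarrow> (nat \<Rightarrow> nat \<Rightarrow> real) \<Rightarrow> real \<Rightarrow> real" where
  "U_const N k2 thinf E0 = max_offdiag N thinf + sqrt (2 * real N * E0 / k2)"

definition in_S :: "nat \<Rightarrow> real \<Rightarrow> (nat \<Rightarrow> real) \<Rightarrow> bool" where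
  "in_S N U th \<longleftrightarrow> (\<forall>i<N. \<forall>j<N. \<bar>th i - th j\<bar> < U \<and> U < pi)"

definition smooth_on :: "real set \<Rightarrow> (real \<Rightarrow> real) \<Rightarrow> bool" where
  "smooth_on S f \<longleftrightarrow> (\<forall>n. \<forall>x\<in>S. ((deriv ^^ n) f) differentiable (at x))"

end

theory Submission
  imports Defs
begin


lemma abs_sgn_mult: "\<bar>y::real\<bar> = sgn y * y"
  by (simp add: sgn_if)

lemma deriv_abs:
  fixes g :: "real \<Rightarrow> real"
  assumes d: "(g has_real_derivative g') (at t within S)" and nz: "g t \<noteq> 0" and tS: "t \<in> S"
  shows "((\<lambda>x. \<bar>g x\<bar>) has_real_derivative sgn (g t) * g') (at t within S)"
proof -
  have c: "(g \<longlongrightarrow> g t) (at t within S)"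
    using DERIV_continuous[OF d] by (simp add: continuous_within)
  have ev: "\<forall>\<^sub>F x in at t within S. sgn (g x) = sgn (g t)"
  proof (cases "g t > 0")
    case True
    then have "\<forall>\<^sub>F x in at t within S. g x > 0" using order_tendstoD(1)[OF c] by auto
    then show ?thesis by eventually_elim (use True in auto)
  next
    case False
    then have "g t < 0" using nz by auto
    then have "\<forall>\<^sub>F x in at t within S. g x < 0" using order_tendstoD(2)[OF c] by auto
    then show ?thesis by eventually_elim (use \<open>g t < 0\<close> in auto)
  qed
  then have ev2: "\<forall>\<^sub>F x in nhds t. x \<in> S \<longrightarrow> \<bar>g x\<bar> = sgn (g t) * g x"
    unfolding eventually_at_filter
  proof (eventually_elim)
    case (elim x)
    show ?case
    proof
      assume xS: "x \<in> S"
      show "\<bar>g x\<bar> = sgn (g t) * g x"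
      proof (cases "x = t")
        case True then show ?thesis using abs_sgn_mult[of "g t"] by simp
      next
        case False
        then have "sgn (g x) = sgn (g t)" using elim xS by blast
        moreover have "\<bar>g x\<bar> = sgn (g x) * g x" by (rule abs_sgn_mult)
        ultimately show ?thesis by simp
      qed
    qed
  qed
  have "((\<lambda>x. sgn (g t) * g x) has_real_derivative sgn (g t) * g') (at t within S)"
    by (intro DERIV_cmult d)
  then show ?thesis
    using has_field_derivative_cong_ev[OF refl ev2 refl refl tS] by simp
qed

lemma sum_antisym:
  fixes h :: "nat \<Rightarrow> nat \<Rightarrow> real" and x :: "nat \<Rightarrow> real"
  assumes as: "\<forall>i<n. \<forall>j<n. h j i = - h i j"
  shows "(\<Sum>i<n. \<Sum>j<n. x i * h i j) = -(1/2) * (\<Sum>i<n. \<Sum>j<n. (x j - x i) * h i j)"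
proof -
  have "(\<Sum>i<n. \<Sum>j<n. x i * h i j) = (\<Sum>i<n. \<Sum>j<n. x j * h j i)"
    by (rule sum.swap)
  also have "\<dots> = (\<Sum>i<n. \<Sum>j<n. - (x j * h i j))"
  proof (intro sum.cong refl)
    fix i j assume "i \<in> {..<n}" "j \<in> {..<n}"
    then have "h j i = - h i j" using as by blast
    then show "x j * h j i = - (x j * h i j)" by simp
  qed
  also have "\<dots> = - (\<Sum>i<n. \<Sum>j<n. x j * h i j)"
    by (simp add: sum_negf)
  finally have e: "(\<Sum>i<n. \<Sum>j<n. x i * h i j) = - (\<Sum>i<n. \<Sum>j<n. x j * h i j)" .
  have "(\<Sum>i<n. \<Sum>j<n. (x j - x i) * h i j) = (\<Sum>i<n. \<Sum>j<n. x j * h i j) - (\<Sum>i<n. \<Sum>j<n. x i * h i j)"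
    by (simp add: algebra_simps sum_subtractf)
  then show ?thesis using e by simp
qed

lemma sum_antisym0:
  fixes h :: "nat \<Rightarrow> nat \<Rightarrow> real"
  assumes as: "\<forall>i<n. \<forall>j<n. h j i = - h i j"
  shows "(\<Sum>i<n. \<Sum>j<n. h i j) = 0"
  using sum_antisym[OF as, of "\<lambda>_. 1"] by simp

lemma pair_le:
  fixes F :: "nat \<Rightarrow> nat \<Rightarrow> real"
  assumes nn: "\<forall>i<n. \<forall>j<n. F i j \<ge> 0" and ij: "i < n" "j < n" "i \<noteq> j"
  shows "F i j + F j i \<le> (\<Sum>i<n. \<Sum>j<n. F i j)"
proof -
  have "(\<Sum>i<n. \<Sum>j<n. F i j) = (\<Sum>(a,b)\<in>{..<n}\<times>{..<n}. F a b)"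
    by (rule sum.cartesian_product)
  also have "\<dots> \<ge> (\<Sum>(a,b)\<in>{(i,j),(j,i)}. F a b)"
    by (rule sum_mono2) (use nn ij in auto)
  finally show ?thesis using ij by simp
qed

lemma sum_sq_diff: "(\<Sum>i<n. \<Sum>j<n. ((x::nat\<Rightarrow>real) j - x i)^2) = 2 * real n * (\<Sum>i<n. (x i)^2) - 2 * (\<Sum>i<n. x i)^2"
  by (simp add: power2_eq_square algebra_simps sum.distrib sum_subtractf sum_distrib_left sum_distrib_right)

lemma deriv_nonpos_le:
  fixes f f' :: "real \<Rightarrow> real"
  assumes ab: "a \<le> b"
    and d: "\<And>x. x \<in> {a..b} \<Longrightarrow> (f has_real_derivative f' x) (at x within {a..b})"
    and nonpos: "\<And>x. x \<in> {a..b} \<Longrightarrow> f' x \<le> 0"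
  shows "f b \<le> f a"
proof -
  have "\<exists>x\<in>{a..b}. f b - f a = (\<lambda>h. f' x * h) (b - a)"
    by (rule mvt_very_simple[OF ab]) (use d in \<open>auto simp: has_field_derivative_def\<close>)
  then obtain x where x: "x \<in> {a..b}" "f b - f a = f' x * (b - a)" by auto
  have "f' x * (b - a) \<le> 0" using nonpos[OF x(1)] ab by (simp add: mult_nonpos_nonneg)
  then show ?thesis using x by simp
qed

lemma deriv_lipschitz:
  fixes f f' :: "real \<Rightarrow> real"
  assumes ab: "a \<le> b"
    and d: "\<And>x. x \<in> {a..b} \<Longrightarrow> (f has_real_derivative f' x) (at x within {a..b})"
    and bd: "\<And>x. x \<in> {a..b} \<Longrightarrow> \<bar>f' x\<bar> \<le> M"
  shows "\<bar>f b - f a\<bar> \<le> M * (b - a)"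
proof -
  have "\<exists>x\<in>{a..b}. f b - f a = (\<lambda>h. f' x * h) (b - a)"
    by (rule mvt_very_simple[OF ab]) (use d in \<open>auto simp: has_field_derivative_def\<close>)
  then obtain x where x: "x \<in> {a..b}" "f b - f a = f' x * (b - a)" by auto
  have "\<bar>f' x * (b - a)\<bar> = \<bar>f' x\<bar> * (b - a)" using ab by (simp add: abs_mult)
  also have "\<dots> \<le> M * (b - a)" using bd[OF x(1)] ab by (simp add: mult_right_mono)
  finally show ?thesis using x by simp
qed



locale kur =
  fixes N :: nat and k0 k1 k2 :: real
    and thinf :: "nat \<Rightarrow> nat \<Rightarrow> real"
    and th w :: "nat \<Rightarrow> real \<Rightarrow> real"
  assumes N2: "N \<ge> 2"
    and k0: "k0 \<ge> 0" and k1: "k1 \<ge> 0" and k2: "k2 > 0"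
    and sym: "\<forall>i<N. \<forall>j<N. thinf i j = thinf j i"
    and diag: "\<forall>i<N. thinf i i = 0"
    and ode: "\<forall>i<N. \<forall>t\<ge>0.
        ((th i) has_real_derivative w i t) (at t within {0..}) \<and>
        ((w i) has_real_derivative
           ((1 / real N) * (\<Sum>j<N. (k0 * cos (th j t - th i t) + k1) * (w j t - w i t))
            + (k2 / real N) * (\<Sum>j<N. (\<bar>th j t - th i t\<bar> - thinf i j) * sgn (th j t - th i t))))
          (at t within {0..})"
    and E0lt: "tot_energy N k2 thinf (\<lambda>i. th i 0) (\<lambda>i. w i 0)
               < k2 * (min_offdiag N thinf)\<^sup>2 / (2 * real N)"
    and coup: "k0 * cos (U_const N k2 thinf (tot_energy N k2 thinf (\<lambda>i. th i 0) (\<lambda>i. w i 0))) + k1 > 0"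
    and sum0: "(\<Sum>i<N. w i 0) = 0"
    and Upi: "U_const N k2 thinf (tot_energy N k2 thinf (\<lambda>i. th i 0) (\<lambda>i. w i 0)) < pi"
begin

definition "E0 = tot_energy N k2 thinf (\<lambda>i. th i 0) (\<lambda>i. w i 0)"
definition "U = U_const N k2 thinf E0"
definition "cc = k0 * cos U + k1"
definition "m = min_offdiag N thinf"
definition "Mx = max_offdiag N thinf"
definition "Ek t = kin_energy N (\<lambda>i. w i t)"
definition "Ep t = pot_energy N k2 thinf (\<lambda>i. th i t)"
definition "E t = tot_energy N k2 thinf (\<lambda>i. th i t) (\<lambda>i. w i t)"
definition "a i j t = k0 * cos (th j t - th i t) + k1"
definition "g i j t = (\<bar>th j t - th i t\<bar> - thinf i j) * sgn (th j t - th i t)"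
definition "F i t = (1 / real N) * (\<Sum>j<N. a i j t * (w j t - w i t)) + (k2 / real N) * (\<Sum>j<N. g i j t)"
definition "D t = (1 / (2 * real N)) * (\<Sum>i<N. \<Sum>j<N. a i j t * (w j t - w i t)^2)"

lemma Npos: "real N > 0" using N2 by simp

lemma Ek_eq: "Ek t = (1/2) * (\<Sum>i<N. (w i t)^2)"
  by (simp add: Ek_def kin_energy_def)

lemma Ep_eq: "Ep t = k2 / (4 * real N) * (\<Sum>i<N. \<Sum>j<N. (\<bar>th j t - th i t\<bar> - thinf i j)^2)"
  by (simp add: Ep_def pot_energy_def)

lemma E_eq: "E t = Ek t + Ep t"
  by (simp add: E_def Ek_def Ep_def tot_energy_def)

lemma E0_eq: "E0 = E 0" by (simp add: E0_def E_def)

lemma Ek_nonneg: "Ek t \<ge> 0"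
  unfolding Ek_eq by (intro mult_nonneg_nonneg sum_nonneg) auto

lemma Ep_nonneg: "Ep t \<ge> 0"
  unfolding Ep_eq using k2 by (intro mult_nonneg_nonneg sum_nonneg) auto

lemma E_nonneg: "E t \<ge> 0" using Ek_nonneg Ep_nonneg E_eq by simp

lemma dth: "t \<ge> 0 \<Longrightarrow> i < N \<Longrightarrow> (th i has_real_derivative w i t) (at t within {0..})"
  using ode by blast

lemma dw: "t \<ge> 0 \<Longrightarrow> i < N \<Longrightarrow> (w i has_real_derivative F i t) (at t within {0..})"
  using ode unfolding F_def a_def g_def by blast

lemma a_sym: "a j i t = a i j t"
proof -
  have "cos (th i t - th j t) = cos (th j t - th i t)"
    by (metis cos_minus minus_diff_eq)
  then show ?thesis by (simp add: a_def)
qed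

lemma a_anti: "a j i t * (w i t - w j t) = - (a i j t * (w j t - w i t))"
proof -
  have "a j i t = a i j t" by (rule a_sym)
  then show ?thesis by (simp add: algebra_simps)
qed

lemma g_anti: "i < N \<Longrightarrow> j < N \<Longrightarrow> g j i t = - g i j t"
proof -
  assume ij: "i < N" "j < N"
  have "thinf j i = thinf i j" using sym ij by auto
  moreover have "\<bar>th i t - th j t\<bar> = \<bar>th j t - th i t\<bar>" by (rule abs_minus_commute)
  moreover have "sgn (th i t - th j t) = - sgn (th j t - th i t)"
    by (metis sgn_minus minus_diff_eq)
  ultimately show ?thesis by (simp add: g_def)
qed

lemma sumF: "(\<Sum>i<N. F i t) = 0"
proof -
  have h1: "(\<Sum>i<N. \<Sum>j<N. a i j t * (w j t - w i t)) = 0"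
    by (rule sum_antisym0) (blast intro: a_anti)
  have h2: "(\<Sum>i<N. \<Sum>j<N. g i j t) = 0"
    by (rule sum_antisym0) (blast intro: g_anti)
  have "(\<Sum>i<N. F i t) = (1 / real N) * (\<Sum>i<N. \<Sum>j<N. a i j t * (w j t - w i t))
      + (k2 / real N) * (\<Sum>i<N. \<Sum>j<N. g i j t)"
    by (simp add: F_def sum.distrib sum_distrib_left)
  then show ?thesis using h1 h2 by simp
qed

lemma sum_w0: "t \<ge> 0 \<Longrightarrow> (\<Sum>i<N. w i t) = 0"
proof -
  assume t: "t \<ge> 0"
  have "\<exists>c. \<forall>x\<in>{0::real..}. (\<Sum>i<N. w i x) = c"
  proof (rule has_field_derivative_zero_constant)
    show "convex {0::real..}" by (rule convex_real_interval)
    fix x :: real assume x: "x \<in> {0..}"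
    have "((\<lambda>x. \<Sum>i<N. w i x) has_real_derivative (\<Sum>i<N. F i x)) (at x within {0..})"
      by (rule DERIV_sum) (use x dw in auto)
    then show "((\<lambda>x. \<Sum>i<N. w i x) has_real_derivative 0) (at x within {0..})"
      using sumF by simp
  qed
  then obtain c where "\<forall>x\<in>{0::real..}. (\<Sum>i<N. w i x) = c" by blast
  then have "(\<Sum>i<N. w i t) = (\<Sum>i<N. w i 0)" using t by auto
  then show ?thesis using sum0 by simp
qed

lemma E_deriv:
  assumes t: "t \<ge> 0" and nz: "\<forall>i<N. \<forall>j<N. i \<noteq> j \<longrightarrow> th j t \<noteq> th i t"
  shows "(E has_real_derivative - D t) (at t within {0..})"
proof -
  have dk: "((\<lambda>t. (w i t)^2) has_real_derivative 2 * (w i t * F i t)) (at t within {0..})"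
    if i: "i < N" for i
    using DERIV_power[OF dw[OF t i], of 2] by (simp add: algebra_simps)
  have dG: "((\<lambda>t. (\<bar>th j t - th i t\<bar> - thinf i j)^2) has_real_derivative
              2 * ((w j t - w i t) * g i j t)) (at t within {0..})"
    if i: "i < N" and j: "j < N" for i j
  proof (cases "i = j")
    case True
    then show ?thesis by (simp add: g_def)
  next
    case False
    have d1: "((\<lambda>t. th j t - th i t) has_real_derivative w j t - w i t) (at t within {0..})"
      by (intro DERIV_diff dth t i j)
    have d2: "((\<lambda>t. \<bar>th j t - th i t\<bar>) has_real_derivative sgn (th j t - th i t) * (w j t - w i t)) (at t within {0..})"
      by (rule deriv_abs[OF d1]) (use nz i j False t in auto)
    have d3: "((\<lambda>t. \<bar>th j t - th i t\<bar> - thinf i j) has_real_derivative sgn (th j t - th i t) * (w j t - w i t)) (at t within {0..})"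
      using DERIV_diff[OF d2 DERIV_const[of "thinf i j"]] by simp
    show ?thesis
      using DERIV_power[OF d3, of 2] by (simp add: g_def algebra_simps)
  qed
  have dsum1: "((\<lambda>t. \<Sum>i<N. (w i t)^2) has_real_derivative (\<Sum>i<N. 2 * (w i t * F i t))) (at t within {0..})"
    by (rule DERIV_sum) (use dk in auto)
  have dsum2: "((\<lambda>t. \<Sum>i<N. \<Sum>j<N. (\<bar>th j t - th i t\<bar> - thinf i j)^2) has_real_derivative
        (\<Sum>i<N. \<Sum>j<N. 2 * ((w j t - w i t) * g i j t))) (at t within {0..})"
    by (intro DERIV_sum) (use dG in auto)
  have dE: "(E has_real_derivative (1/2) * (\<Sum>i<N. 2 * (w i t * F i t))
        + k2 / (4 * real N) * (\<Sum>i<N. \<Sum>j<N. 2 * ((w j t - w i t) * g i j t))) (at t within {0..})"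
  proof -
    have "E = (\<lambda>t. (1/2) * (\<Sum>i<N. (w i t)^2) + k2 / (4 * real N) * (\<Sum>i<N. \<Sum>j<N. (\<bar>th j t - th i t\<bar> - thinf i j)^2))"
      by (rule ext) (simp add: E_eq Ek_eq Ep_eq)
    then show ?thesis
      using DERIV_add[OF DERIV_cmult[OF dsum1, of "1/2"] DERIV_cmult[OF dsum2, of "k2 / (4 * real N)"]]
      by simp
  qed
  define S1 where "S1 = (\<Sum>i<N. \<Sum>j<N. w i t * (a i j t * (w j t - w i t)))"
  define S2 where "S2 = (\<Sum>i<N. \<Sum>j<N. w i t * g i j t)"
  define Q where "Q = (\<Sum>i<N. \<Sum>j<N. a i j t * (w j t - w i t)^2)"
  define R where "R = (\<Sum>i<N. \<Sum>j<N. (w j t - w i t) * g i j t)"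
  have A: "(\<Sum>i<N. w i t * F i t) = (1 / real N) * S1 + (k2 / real N) * S2"
    by (simp add: S1_def S2_def F_def sum.distrib sum_distrib_left distrib_left algebra_simps)
  have B: "S1 = -(1/2) * Q"
  proof -
    have "S1 = -(1/2) * (\<Sum>i<N. \<Sum>j<N. (w j t - w i t) * (a i j t * (w j t - w i t)))"
      unfolding S1_def by (rule sum_antisym) (blast intro: a_anti)
    also have "(\<Sum>i<N. \<Sum>j<N. (w j t - w i t) * (a i j t * (w j t - w i t))) = Q"
      unfolding Q_def by (intro sum.cong refl) (simp add: power2_eq_square algebra_simps)
    finally show ?thesis .
  qed
  have C: "S2 = -(1/2) * R"
    unfolding S2_def R_def by (rule sum_antisym) (blast intro: g_anti)
  have Dd: "(\<Sum>i<N. \<Sum>j<N. 2 * ((w j t - w i t) * g i j t)) = 2 * R"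
    by (simp add: R_def sum_distrib_left)
  have Ds: "(\<Sum>i<N. 2 * (w i t * F i t)) = 2 * (\<Sum>i<N. w i t * F i t)"
    by (simp add: sum_distrib_left)
  have "(1/2) * (\<Sum>i<N. 2 * (w i t * F i t))
        + k2 / (4 * real N) * (\<Sum>i<N. \<Sum>j<N. 2 * ((w j t - w i t) * g i j t)) = - D t"
    unfolding Ds Dd A B C using Npos by (simp add: D_def Q_def field_simps)
  then show ?thesis using dE by simp
qed

end


context kur begin

definition "offset = {thinf i j | i j. i < N \<and> j < N \<and> i \<noteq> j}"

lemma offset_fin: "finite offset"
proof -
  have "offset \<subseteq> (\<lambda>(i,j). thinf i j) ` ({..<N} \<times> {..<N})"
    unfolding offset_def by auto
  then show ?thesis by (rule finite_subset) auto
qed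

lemma offset_ne: "offset \<noteq> {}"
proof -
  have "thinf 0 1 \<in> offset" unfolding offset_def using N2 by force
  then show ?thesis by auto
qed

lemma m_le: "i < N \<Longrightarrow> j < N \<Longrightarrow> i \<noteq> j \<Longrightarrow> m \<le> thinf i j"
  unfolding m_def min_offdiag_def using offset_fin unfolding offset_def
  by (intro Min_le) auto

lemma Mx_ge: "i < N \<Longrightarrow> j < N \<Longrightarrow> i \<noteq> j \<Longrightarrow> thinf i j \<le> Mx"
  unfolding Mx_def max_offdiag_def using offset_fin unfolding offset_def
  by (intro Max_ge) auto

lemma m_in: "\<exists>i j. i < N \<and> j < N \<and> i \<noteq> j \<and> thinf i j = m"
proof -
  have "Min offset \<in> offset" using offset_fin offset_ne by (rule Min_in)
  then have "\<exists>i j. Min offset = thinf i j \<and> i < N \<and> j < N \<and> i \<noteq> j"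
    by (simp add: offset_def)
  moreover have "m = Min offset" by (simp add: m_def min_offdiag_def offset_def)
  ultimately show ?thesis by metis
qed

lemma Ep_pair:
  assumes ij: "i < N" "j < N" "i \<noteq> j"
  shows "k2 / (2 * real N) * (\<bar>th j t - th i t\<bar> - thinf i j)^2 \<le> Ep t"
proof -
  let ?G = "\<lambda>i j. (\<bar>th j t - th i t\<bar> - thinf i j)^2"
  have "?G i j + ?G j i \<le> (\<Sum>i<N. \<Sum>j<N. ?G i j)"
    using pair_le[where F="?G" and n=N and i=i and j=j] ij by simp
  moreover have "?G j i = ?G i j"
    using sym[rule_format, OF ij(2) ij(1)] by (simp add: abs_minus_commute)
  ultimately have "2 * ?G i j \<le> (\<Sum>i<N. \<Sum>j<N. ?G i j)" by simp
  then have "k2 / (4 * real N) * (2 * ?G i j) \<le> k2 / (4 * real N) * (\<Sum>i<N. \<Sum>j<N. ?G i j)"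
    using k2 Npos by (intro mult_left_mono) auto
  then show ?thesis unfolding Ep_eq by simp
qed

lemma E0_nonneg: "E0 \<ge> 0" using E_nonneg E0_eq by simp

lemma E0_lt: "E0 < k2 * m^2 / (2 * real N)"
  using E0lt unfolding E0_def m_def .

lemma m_pos: "m > 0"
proof (rule ccontr)
  assume "\<not> m > 0"
  then have m0: "m \<le> 0" by simp
  obtain i j where ij: "i < N" "j < N" "i \<noteq> j" "thinf i j = m" using m_in by blast
  have "m^2 \<le> (\<bar>th j 0 - th i 0\<bar> - thinf i j)^2"
  proof -
    have "\<bar>m\<bar> \<le> \<bar>th j 0 - th i 0\<bar> - thinf i j" using m0 ij(4) by simp
    then have "\<bar>m\<bar>^2 \<le> (\<bar>th j 0 - th i 0\<bar> - thinf i j)^2"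
      by (intro power_mono) auto
    then show ?thesis by simp
  qed
  then have "k2 / (2 * real N) * m^2 \<le> k2 / (2 * real N) * (\<bar>th j 0 - th i 0\<bar> - thinf i j)^2"
    using k2 Npos by (intro mult_left_mono) auto
  also have "\<dots> \<le> Ep 0" by (rule Ep_pair) (use ij in auto)
  also have "\<dots> \<le> E0" using E0_eq E_eq Ek_nonneg[of 0] by simp
  finally show False using E0_lt by simp
qed

lemma U_eq: "U = Mx + sqrt (2 * real N * E0 / k2)"
  by (simp add: U_def U_const_def Mx_def)

lemma U_pi: "U < pi" using Upi unfolding U_def E0_def .

lemma cc_pos: "cc > 0" using coup unfolding cc_def U_def E0_def .

lemma Mx_pos: "Mx > 0"
proof -
  have "m \<le> thinf 0 1" using N2 by (intro m_le) auto
  moreover have "thinf 0 1 \<le> Mx" using N2 by (intro Mx_ge) auto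
  ultimately show ?thesis using m_pos by simp
qed

lemma U_pos: "U > 0"
proof -
  have "sqrt (2 * real N * E0 / k2) \<ge> 0" using E0_nonneg k2 by simp
  then show ?thesis unfolding U_eq using Mx_pos by linarith
qed

lemma bounds:
  assumes Et: "E t \<le> E0" and ij: "i < N" "j < N"
  shows "(i \<noteq> j \<longrightarrow> \<bar>th j t - th i t\<bar> > 0) \<and> \<bar>th j t - th i t\<bar> \<le> U"
proof (cases "i = j")
  case True then show ?thesis using U_pos by simp
next
  case False
  let ?x = "\<bar>th j t - th i t\<bar> - thinf i j"
  have h: "k2 / (2 * real N) * ?x^2 \<le> E0"
    using Ep_pair[OF ij False, of t] E_eq[of t] Ek_nonneg[of t] Et by linarith
  have "2 * real N * (k2 / (2 * real N) * ?x^2) \<le> 2 * real N * E0"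
    using h Npos by (intro mult_left_mono) auto
  moreover have "2 * real N * (k2 / (2 * real N) * ?x^2) = ?x^2 * k2" using Npos by simp
  ultimately have "?x^2 * k2 \<le> 2 * real N * E0" by simp
  then have x2: "?x^2 \<le> 2 * real N * E0 / k2"
    using k2 by (simp add: pos_le_divide_eq)
  have "2 * real N * E0 < 2 * real N * (k2 * m^2 / (2 * real N))"
    using E0_lt Npos by (intro mult_strict_left_mono) auto
  also have "\<dots> = m^2 * k2" using Npos by simp
  finally have "2 * real N * E0 / k2 < m^2" using k2 by (simp add: pos_divide_less_eq)
  with x2 have "?x^2 < m^2" by linarith
  then have "\<bar>?x\<bar>^2 < m^2" by simp
  then have "\<bar>?x\<bar> < m" by (rule power2_less_imp_less) (use m_pos in simp)
  moreover have "m \<le> thinf i j" using m_le ij False by blast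
  ultimately have pos: "\<bar>th j t - th i t\<bar> > 0" by linarith
  have "?x \<le> sqrt (2 * real N * E0 / k2)" using x2 by (rule real_le_rsqrt)
  moreover have "thinf i j \<le> Mx" using Mx_ge ij False by blast
  ultimately have "\<bar>th j t - th i t\<bar> \<le> U" unfolding U_eq by linarith
  then show ?thesis using pos by simp
qed

lemma a_lower:
  assumes "\<bar>th j t - th i t\<bar> \<le> U"
  shows "a i j t \<ge> cc"
proof -
  have "cos U \<le> cos \<bar>th j t - th i t\<bar>"
    by (rule cos_monotone_0_pi_le) (use assms U_pi in auto)
  then have "cos U \<le> cos (th j t - th i t)" by simp
  then have "k0 * cos U \<le> k0 * cos (th j t - th i t)" using k0 by (rule mult_left_mono)
  then show ?thesis by (simp add: a_def cc_def)
qed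

lemma D_nonneg: "(\<forall>i<N. \<forall>j<N. a i j t \<ge> 0) \<Longrightarrow> D t \<ge> 0"
  unfolding D_def using Npos by (intro mult_nonneg_nonneg sum_nonneg) auto

end


context kur begin

lemma cont_th: "i < N \<Longrightarrow> continuous_on {0..} (th i)"
  using dth by (auto simp: continuous_on_eq_continuous_within intro: DERIV_continuous)

lemma cont_w: "i < N \<Longrightarrow> continuous_on {0..} (w i)"
  using dw by (auto simp: continuous_on_eq_continuous_within intro: DERIV_continuous)

lemma cont_E: "continuous_on {0..} E"
proof -
  have "E = (\<lambda>t. (1/2) * (\<Sum>i<N. (w i t)^2) + k2 / (4 * real N) * (\<Sum>i<N. \<Sum>j<N. (\<bar>th j t - th i t\<bar> - thinf i j)^2))"
    by (rule ext) (simp add: E_eq Ek_eq Ep_eq)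
  then show ?thesis
    by (simp only:) (intro continuous_intros; auto intro: cont_th cont_w)
qed

definition "P t = (\<forall>i<N. \<forall>j<N. (i \<noteq> j \<longrightarrow> th j t - th i t \<noteq> 0) \<and> a i j t > 0)"

lemma P_of_E: "E t \<le> E0 \<Longrightarrow> P t"
proof -
  assume Et: "E t \<le> E0"
  have "(i \<noteq> j \<longrightarrow> th j t - th i t \<noteq> 0) \<and> a i j t > 0" if ij: "i < N" "j < N" for i j
  proof -
    have b: "(i \<noteq> j \<longrightarrow> \<bar>th j t - th i t\<bar> > 0) \<and> \<bar>th j t - th i t\<bar> \<le> U"
      by (rule bounds[OF Et ij])
    then have "a i j t \<ge> cc" by (intro a_lower) simp
    then show ?thesis using b cc_pos by auto
  qed
  then show ?thesis unfolding P_def by blast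
qed

lemma E_deriv_P: "t \<ge> 0 \<Longrightarrow> P t \<Longrightarrow> (E has_real_derivative - D t) (at t within {0..})"
  by (rule E_deriv) (auto simp: P_def)

lemma D_nonneg_P: "P t \<Longrightarrow> D t \<ge> 0"
  by (rule D_nonneg) (auto simp: P_def less_imp_le)

lemma E_dec_on:
  assumes s: "0 \<le> s" "s \<le> x" and Ps: "\<forall>y\<in>{s..x}. P y"
  shows "E x \<le> E s"
proof (rule deriv_nonpos_le[where f' = "\<lambda>y. - D y" and f = E and a = s and b = x])
  show "s \<le> x" by fact
  fix y assume y: "y \<in> {s..x}"
  have "(E has_real_derivative - D y) (at y within {0..})"
    using E_deriv_P y Ps s by auto
  then show "(E has_real_derivative - D y) (at y within {s..x})"
    by (rule DERIV_subset) (use s in auto)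
  show "- D y \<le> 0" using D_nonneg_P Ps y by auto
qed

lemma local_step:
  assumes t: "t \<ge> 0" and Et: "E t \<le> E0"
  shows "\<exists>b>t. \<forall>x\<in>{t..b}. E x \<le> E t"
proof -
  have Pt: "P t" using P_of_E Et by blast
  define Q where "Q = (\<lambda>x i j. (i \<noteq> j \<longrightarrow> th j x - th i x \<noteq> 0) \<and> a i j x > 0)"
  have evij: "\<forall>\<^sub>F x in at t within {0..}. Q x i j" if i: "i < N" and j: "j < N" for i j
  proof -
    have lim: "((\<lambda>x. th j x - th i x) \<longlongrightarrow> th j t - th i t) (at t within {0..})"
      using DERIV_continuous[OF DERIV_diff[OF dth[OF t j] dth[OF t i]]]
      by (simp add: continuous_within)
    have e1: "\<forall>\<^sub>F x in at t within {0..}. i \<noteq> j \<longrightarrow> th j x - th i x \<noteq> 0"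
    proof (cases "i = j")
      case True then show ?thesis by simp
    next
      case False
      then have "th j t - th i t \<noteq> 0" using Pt i j by (auto simp: P_def)
      then have "\<forall>\<^sub>F x in at t within {0..}. th j x - th i x \<noteq> 0"
        using tendsto_imp_eventually_ne[OF lim] by blast
      then show ?thesis by (rule eventually_mono) simp
    qed
    have lim2: "((\<lambda>x. a i j x) \<longlongrightarrow> a i j t) (at t within {0..})"
      unfolding a_def by (intro tendsto_intros lim)
    have "a i j t > 0" using Pt i j by (auto simp: P_def)
    then have e2: "\<forall>\<^sub>F x in at t within {0..}. a i j x > 0"
      using order_tendstoD(1)[OF lim2] by blast
    show ?thesis using eventually_conj[OF e1 e2] unfolding Q_def .
  qed
  have "\<forall>i\<in>{..<N}. \<forall>\<^sub>F x in at t within {0..}. \<forall>j\<in>{..<N}. Q x i j"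
    using evij by (auto intro!: eventually_ball_finite)
  then have "\<forall>\<^sub>F x in at t within {0..}. \<forall>i\<in>{..<N}. \<forall>j\<in>{..<N}. Q x i j"
    by (auto intro!: eventually_ball_finite)
  then have "\<forall>\<^sub>F x in at t within {0..}. P x"
    by (rule eventually_mono) (auto simp: P_def Q_def)
  then obtain d where d: "d > 0" "\<forall>x\<in>{0..}. x \<noteq> t \<and> dist x t < d \<longrightarrow> P x"
    unfolding eventually_at by blast
  define b where "b = t + d / 2"
  have Pint: "\<forall>y\<in>{t..b}. P y"
  proof
    fix y assume y: "y \<in> {t..b}"
    show "P y"
    proof (cases "y = t")
      case True then show ?thesis using Pt by simp
    next
      case False
      then show ?thesis using d y t by (auto simp: b_def dist_real_def)
    qed
  qed
  have "\<forall>x\<in>{t..b}. E x \<le> E t"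
  proof
    fix x assume x: "x \<in> {t..b}"
    show "E x \<le> E t" by (rule E_dec_on) (use x t Pint in auto)
  qed
  moreover have "b > t" using d by (simp add: b_def)
  ultimately show ?thesis by blast
qed

lemma E_le_E0:
  assumes t: "t \<ge> 0"
  shows "E t \<le> E0"
proof (rule ccontr)
  assume "\<not> E t \<le> E0"
  then have Et: "E t > E0" by simp
  define S where "S = {0..t} \<inter> E -` {..E0}"
  have cl: "closed S" unfolding S_def
    by (rule continuous_closed_preimage) (auto intro: continuous_on_subset[OF cont_E])
  have S0: "0 \<in> S" using t E0_eq by (simp add: S_def)
  have bdd: "bdd_above S" unfolding S_def bdd_above_def by auto
  define s where "s = Sup S"
  have sS: "s \<in> S" unfolding s_def using S0 bdd cl by (intro closed_contains_Sup) auto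
  then have s: "0 \<le> s" "s \<le> t" "E s \<le> E0" by (auto simp: S_def)
  have "s \<noteq> t" using Et s(3) by auto
  then have st: "s < t" using s by simp
  obtain b where b: "b > s" "\<forall>x\<in>{s..b}. E x \<le> E s" using local_step[OF s(1) s(3)] by blast
  define x where "x = min b t"
  have xb: "x \<in> {s..b}" using b st by (auto simp: x_def)
  then have "E x \<le> E s" using b by blast
  then have "E x \<le> E0" using s(3) by linarith
  moreover have "0 \<le> x" "x \<le> t" using xb s by (auto simp: x_def)
  ultimately have "x \<in> S" by (simp add: S_def)
  then have "x \<le> s" unfolding s_def using bdd by (rule cSup_upper)
  moreover have "x > s" using b st by (simp add: x_def)
  ultimately show False by simp
qed

end


context kur begin

lemma P_all: "t \<ge> 0 \<Longrightarrow> P t" using P_of_E E_le_E0 by blast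

lemma E_antitone: "0 \<le> s \<Longrightarrow> s \<le> x \<Longrightarrow> E x \<le> E s"
  by (rule E_dec_on) (auto intro: P_all)

lemma D_ge:
  assumes t: "t \<ge> 0"
  shows "D t \<ge> 2 * cc * Ek t"
proof -
  have Et: "E t \<le> E0" using E_le_E0 t .
  have ac: "cc * (w j t - w i t)^2 \<le> a i j t * (w j t - w i t)^2" if "i < N" "j < N" for i j
  proof -
    have "\<bar>th j t - th i t\<bar> \<le> U" using bounds[OF Et that] by simp
    then have "cc \<le> a i j t" by (rule a_lower)
    then show ?thesis by (rule mult_right_mono) simp
  qed
  have le: "(\<Sum>i<N. \<Sum>j<N. cc * (w j t - w i t)^2) \<le> (\<Sum>i<N. \<Sum>j<N. a i j t * (w j t - w i t)^2)"
    by (rule sum_mono, rule sum_mono) (use ac in auto)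
  have "(\<Sum>i<N. \<Sum>j<N. cc * (w j t - w i t)^2) = cc * (\<Sum>i<N. \<Sum>j<N. (w j t - w i t)^2)"
    by (simp add: sum_distrib_left)
  also have "\<dots> = cc * (2 * real N * (\<Sum>i<N. (w i t)^2))"
    using sum_sq_diff[where n = N and x = "\<lambda>i. w i t"] sum_w0[OF t] by simp
  finally have eq: "(\<Sum>i<N. \<Sum>j<N. cc * (w j t - w i t)^2) = cc * (2 * real N * (\<Sum>i<N. (w i t)^2))" .
  have "1 / (2 * real N) * (cc * (2 * real N * (\<Sum>i<N. (w i t)^2)))
      \<le> 1 / (2 * real N) * (\<Sum>i<N. \<Sum>j<N. a i j t * (w j t - w i t)^2)"
    using le eq Npos by (intro mult_left_mono) auto
  moreover have "1 / (2 * real N) * (cc * (2 * real N * (\<Sum>i<N. (w i t)^2))) = 2 * cc * Ek t"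
    using Npos by (simp add: Ek_eq)
  ultimately show ?thesis by (simp add: D_def)
qed

lemma w_bound:
  assumes t: "t \<ge> 0" and i: "i < N"
  shows "\<bar>w i t\<bar> \<le> sqrt (2 * E0)"
proof -
  have "(w i t)^2 \<le> (\<Sum>j<N. (w j t)^2)" by (rule member_le_sum) (use i in auto)
  also have "\<dots> = 2 * Ek t" by (simp add: Ek_eq)
  also have "\<dots> \<le> 2 * E0" using E_le_E0[OF t] E_eq[of t] Ep_nonneg[of t] by linarith
  finally have "\<bar>w i t\<bar>^2 \<le> 2 * E0" by simp
  then show ?thesis by (rule real_le_rsqrt)
qed

definition "T = (\<Sum>i<N. \<Sum>j<N. \<bar>thinf i j\<bar>)"
definition "MF = (k0 + k1) * (2 * sqrt (2 * E0)) + k2 * (U + T)"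

lemma thinf_bound: "i < N \<Longrightarrow> j < N \<Longrightarrow> \<bar>thinf i j\<bar> \<le> T"
proof -
  assume i: "i < N" and j: "j < N"
  have "\<bar>thinf i j\<bar> \<le> (\<Sum>j<N. \<bar>thinf i j\<bar>)" by (rule member_le_sum) (use j in auto)
  also have "\<dots> \<le> (\<Sum>i<N. \<Sum>j<N. \<bar>thinf i j\<bar>)"
    by (rule member_le_sum[where f = "\<lambda>i. \<Sum>j<N. \<bar>thinf i j\<bar>"]) (use i in \<open>auto intro: sum_nonneg\<close>)
  finally show ?thesis by (simp add: T_def)
qed

lemma abs_sgn_le: "\<bar>sgn (x::real)\<bar> \<le> 1"
  by (simp add: sgn_if)

lemma F_bound:
  assumes t: "t \<ge> 0" and i: "i < N"
  shows "\<bar>F i t\<bar> \<le> MF"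
proof -
  define B where "B = sqrt (2 * E0)"
  have Et: "E t \<le> E0" using E_le_E0 t .
  have t1: "\<bar>a i j t * (w j t - w i t)\<bar> \<le> (k0 + k1) * (2 * B)" if j: "j \<in> {..<N}" for j
  proof -
    have "\<bar>k0 * cos (th j t - th i t)\<bar> \<le> k0"
      using k0 abs_cos_le_one[of "th j t - th i t"] by (simp add: abs_mult mult_left_le)
    then have aa: "\<bar>a i j t\<bar> \<le> k0 + k1" using k1 by (simp add: a_def)
    have "\<bar>w j t - w i t\<bar> \<le> 2 * B"
      using w_bound[OF t i] w_bound[OF t, of j] j by (simp add: B_def)
    then have "\<bar>a i j t\<bar> * \<bar>w j t - w i t\<bar> \<le> (k0 + k1) * (2 * B)"
      using aa by (intro mult_mono) auto
    then show ?thesis by (simp add: abs_mult)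
  qed
  have t2: "\<bar>g i j t\<bar> \<le> U + T" if j: "j \<in> {..<N}" for j
  proof -
    have d: "\<bar>th j t - th i t\<bar> \<le> U" using bounds[OF Et i, of j] j by simp
    have th: "\<bar>thinf i j\<bar> \<le> T" using thinf_bound i j by simp
    have "\<bar>g i j t\<bar> = \<bar>\<bar>th j t - th i t\<bar> - thinf i j\<bar> * \<bar>sgn (th j t - th i t)\<bar>"
      by (simp add: g_def abs_mult)
    also have "\<dots> \<le> \<bar>\<bar>th j t - th i t\<bar> - thinf i j\<bar> * 1"
      by (rule mult_left_mono) (auto simp: abs_sgn_le)
    also have "\<dots> \<le> \<bar>th j t - th i t\<bar> + \<bar>thinf i j\<bar>"
      using abs_triangle_ineq4[of "\<bar>th j t - th i t\<bar>" "thinf i j"] by simp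
    also have "\<dots> \<le> U + T" using d th by linarith
    finally show ?thesis .
  qed
  have s1: "\<bar>\<Sum>j<N. a i j t * (w j t - w i t)\<bar> \<le> real N * ((k0 + k1) * (2 * B))"
  proof -
    have "\<bar>\<Sum>j<N. a i j t * (w j t - w i t)\<bar> \<le> (\<Sum>j<N. \<bar>a i j t * (w j t - w i t)\<bar>)" by (rule sum_abs)
    also have "\<dots> \<le> real (card {..<N}) * ((k0 + k1) * (2 * B))" by (rule sum_bounded_above) (rule t1)
    finally show ?thesis by simp
  qed
  have s2: "\<bar>\<Sum>j<N. g i j t\<bar> \<le> real N * (U + T)"
  proof -
    have "\<bar>\<Sum>j<N. g i j t\<bar> \<le> (\<Sum>j<N. \<bar>g i j t\<bar>)" by (rule sum_abs)
    also have "\<dots> \<le> real (card {..<N}) * (U + T)" by (rule sum_bounded_above) (rule t2)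
    finally show ?thesis by simp
  qed
  have "\<bar>F i t\<bar> \<le> \<bar>(1 / real N) * (\<Sum>j<N. a i j t * (w j t - w i t))\<bar> + \<bar>(k2 / real N) * (\<Sum>j<N. g i j t)\<bar>"
    unfolding F_def by (rule abs_triangle_ineq)
  also have "\<dots> = (1 / real N) * \<bar>\<Sum>j<N. a i j t * (w j t - w i t)\<bar> + (k2 / real N) * \<bar>\<Sum>j<N. g i j t\<bar>"
    using k2 Npos by (simp add: abs_mult)
  also have "\<dots> \<le> (1 / real N) * (real N * ((k0 + k1) * (2 * B))) + (k2 / real N) * (real N * (U + T))"
    using s1 s2 k2 Npos by (intro add_mono mult_left_mono) auto
  also have "\<dots> = MF" using Npos by (simp add: MF_def B_def)
  finally show ?thesis .
qed

lemma MF_nonneg: "MF \<ge> 0"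
  using F_bound[of 0 0] N2 by fastforce

lemma Ek_deriv:
  assumes t: "t \<ge> 0"
  shows "(Ek has_real_derivative (\<Sum>i<N. w i t * F i t)) (at t within {0..})"
proof -
  have dk: "((\<lambda>t. (w i t)^2) has_real_derivative 2 * (w i t * F i t)) (at t within {0..})"
    if i: "i \<in> {..<N}" for i
    using DERIV_power[OF dw[OF t], of i 2] i by (simp add: algebra_simps)
  have "((\<lambda>t. \<Sum>i<N. (w i t)^2) has_real_derivative (\<Sum>i<N. 2 * (w i t * F i t))) (at t within {0..})"
    by (rule DERIV_sum) (rule dk)
  then have "((\<lambda>t. (1/2) * (\<Sum>i<N. (w i t)^2)) has_real_derivative (1/2) * (\<Sum>i<N. 2 * (w i t * F i t))) (at t within {0..})"
    by (rule DERIV_cmult)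
  moreover have "Ek = (\<lambda>t. (1/2) * (\<Sum>i<N. (w i t)^2))" by (rule ext) (simp add: Ek_eq)
  moreover have "(1/2) * (\<Sum>i<N. 2 * (w i t * F i t)) = (\<Sum>i<N. w i t * F i t)"
    by (simp add: sum_distrib_left[symmetric])
  ultimately show ?thesis by simp
qed

lemma Ek'_bound:
  assumes t: "t \<ge> 0"
  shows "\<bar>\<Sum>i<N. w i t * F i t\<bar> \<le> real N * (sqrt (2 * E0) * MF)"
proof -
  have "\<bar>\<Sum>i<N. w i t * F i t\<bar> \<le> (\<Sum>i<N. \<bar>w i t * F i t\<bar>)" by (rule sum_abs)
  also have "\<dots> \<le> real (card {..<N}) * (sqrt (2 * E0) * MF)"
  proof (rule sum_bounded_above)
    fix i assume i: "i \<in> {..<N}"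
    have "\<bar>w i t\<bar> * \<bar>F i t\<bar> \<le> sqrt (2 * E0) * MF"
      using w_bound[OF t] F_bound[OF t] i E0_nonneg by (intro mult_mono) auto
    then show "\<bar>w i t * F i t\<bar> \<le> sqrt (2 * E0) * MF" by (simp add: abs_mult)
  qed
  finally show ?thesis by simp
qed

definition "L = Inf (E ` {0..})"

lemma bddE: "bdd_below (E ` {0..})"
  by (rule bdd_belowI[of _ 0]) (auto intro: E_nonneg)

lemma L_le: "t \<ge> 0 \<Longrightarrow> L \<le> E t"
  unfolding L_def by (rule cInf_lower) (auto intro: bddE)

lemma L_nonneg: "L \<ge> 0"
  unfolding L_def by (rule cInf_greatest) (auto intro: E_nonneg)

lemma E_lim: "(E \<longlongrightarrow> L) at_top"
proof (rule decreasing_tendsto)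
  show "\<forall>\<^sub>F n in at_top. L \<le> E n"
    using eventually_ge_at_top[of "0::real"] by (rule eventually_mono) (rule L_le)
  fix x assume x: "L < x"
  have "\<exists>y\<in>E ` {0..}. y < x"
    using x unfolding L_def by (subst (asm) cInf_less_iff) (auto intro: bddE)
  then obtain t0 where t0: "t0 \<ge> 0" "E t0 < x" by auto
  show "\<forall>\<^sub>F n in at_top. E n < x"
    using eventually_ge_at_top[of t0]
  proof (rule eventually_mono)
    fix n assume "t0 \<le> n"
    then have "E n \<le> E t0" using E_antitone t0 by blast
    then show "E n < x" using t0 by simp
  qed
qed

lemma Ek_lim: "(Ek \<longlongrightarrow> 0) at_top"
proof (rule decreasing_tendsto)
  show "\<forall>\<^sub>F n in at_top. 0 \<le> Ek n" by (simp add: Ek_nonneg)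
  fix \<epsilon> :: real assume eps: "0 < \<epsilon>"
  define M where "M = real N * (sqrt (2 * E0) * MF) + 1"
  have M0: "real N * (sqrt (2 * E0) * MF) \<ge> 0" using MF_nonneg E0_nonneg by simp
  then have Mpos: "M > 0" by (simp add: M_def)
  have Mb: "\<bar>\<Sum>i<N. w i t * F i t\<bar> \<le> M" if "t \<ge> 0" for t
    using Ek'_bound[OF that] by (simp add: M_def)
  define h where "h = \<epsilon> / (2 * M)"
  have hpos: "h > 0" using eps Mpos by (simp add: h_def)
  have Mh: "M * h = \<epsilon> / 2" using Mpos by (simp add: h_def)
  define \<kappa> where "\<kappa> = cc * \<epsilon> * h"
  have kpos: "\<kappa> > 0" using cc_pos eps hpos by (simp add: \<kappa>_def)
  have "\<forall>\<^sub>F n in at_top. E n < L + \<kappa>"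
    using order_tendstoD(2)[OF E_lim, of "L + \<kappa>"] kpos by simp
  moreover have "\<forall>\<^sub>F n in at_top. n \<ge> (0::real)" by (rule eventually_ge_at_top)
  ultimately show "\<forall>\<^sub>F n in at_top. Ek n < \<epsilon>"
  proof eventually_elim
    case (elim n)
    show ?case
    proof (rule ccontr)
      assume "\<not> Ek n < \<epsilon>"
      then have big: "Ek n \<ge> \<epsilon>" by simp
      have lowk: "Ek y \<ge> \<epsilon> / 2" if y: "y \<in> {n..n+h}" for y
      proof -
        have "\<bar>Ek y - Ek n\<bar> \<le> M * (y - n)"
        proof (rule deriv_lipschitz[where f = Ek and f' = "\<lambda>t. \<Sum>i<N. w i t * F i t" and a = n and b = y])
          show "n \<le> y" using y by simp
          fix x assume x: "x \<in> {n..y}"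
          show "(Ek has_real_derivative (\<Sum>i<N. w i x * F i x)) (at x within {n..y})"
            by (rule DERIV_subset[OF Ek_deriv]) (use x elim in auto)
          show "\<bar>\<Sum>i<N. w i x * F i x\<bar> \<le> M" using Mb x elim by auto
        qed
        moreover have "M * (y - n) \<le> M * h" using y Mpos by (intro mult_left_mono) auto
        ultimately show ?thesis using big Mh by linarith
      qed
      have "E (n + h) + cc * \<epsilon> * (n + h) \<le> E n + cc * \<epsilon> * n"
      proof (rule deriv_nonpos_le[where f = "\<lambda>y. E y + cc * \<epsilon> * y" and f' = "\<lambda>y. - D y + cc * \<epsilon>" and a = n and b = "n + h"])
        show "n \<le> n + h" using hpos by simp
        fix x assume x: "x \<in> {n..n+h}"
        have "(E has_real_derivative - D x) (at x within {0..})"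
          using E_deriv_P P_all x elim by auto
        then have dE: "(E has_real_derivative - D x) (at x within {n..n+h})"
          by (rule DERIV_subset) (use elim in auto)
        have dl: "((\<lambda>y. cc * \<epsilon> * y) has_real_derivative cc * \<epsilon>) (at x within {n..n+h})"
          using DERIV_cmult[OF DERIV_ident, of "cc * \<epsilon>"] by simp
        show "((\<lambda>y. E y + cc * \<epsilon> * y) has_real_derivative - D x + cc * \<epsilon>) (at x within {n..n+h})"
          by (rule DERIV_add[OF dE dl])
        have "D x \<ge> 2 * cc * Ek x" using D_ge x elim by auto
        moreover have "2 * cc * Ek x \<ge> 2 * cc * (\<epsilon> / 2)"
          using lowk[OF x] cc_pos by (intro mult_left_mono) auto
        ultimately show "- D x + cc * \<epsilon> \<le> 0" by simp
      qed
      then have "E n \<ge> E (n + h) + \<kappa>" by (simp add: \<kappa>_def algebra_simps)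
      moreover have "L \<le> E (n + h)" using L_le elim hpos by simp
      ultimately show False using elim by simp
    qed
  qed
qed

lemma Ep_lim: "(Ep \<longlongrightarrow> L) at_top"
proof -
  have "((\<lambda>t. E t - Ek t) \<longlongrightarrow> L - 0) at_top" by (intro tendsto_diff E_lim Ek_lim)
  moreover have "(\<lambda>t. E t - Ek t) = Ep" by (rule ext) (simp add: E_eq)
  ultimately show ?thesis by simp
qed

lemma final:
  "\<exists>Einf \<ge> 0.
     ((\<lambda>t. kin_energy N (\<lambda>i. w i t)) \<longlongrightarrow> 0) at_top \<and>
     ((\<lambda>t. pot_energy N k2 thinf (\<lambda>i. th i t)) \<longlongrightarrow> Einf) at_top \<and>
     ((\<lambda>t. tot_energy N k2 thinf (\<lambda>i. th i t) (\<lambda>i. w i t)) \<longlongrightarrow> Einf) at_top"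
proof -
  have e1: "(\<lambda>t. kin_energy N (\<lambda>i. w i t)) = Ek" by (rule ext) (simp add: Ek_def)
  have e2: "(\<lambda>t. pot_energy N k2 thinf (\<lambda>i. th i t)) = Ep" by (rule ext) (simp add: Ep_def)
  have e3: "(\<lambda>t. tot_energy N k2 thinf (\<lambda>i. th i t) (\<lambda>i. w i t)) = E" by (rule ext) (simp add: E_def)
  show ?thesis unfolding e1 e2 e3 using L_nonneg Ek_lim Ep_lim E_lim by blast
qed

end

theorem corollary3p2:
  fixes N :: nat and k0 k1 k2 :: real
    and thinf :: "nat \<Rightarrow> nat \<Rightarrow> real"
    and th w :: "nat \<Rightarrow> real \<Rightarrow> real"
  assumes N2: "N \<ge> 2"
    and k0: "k0 \<ge> 0" and k1: "k1 \<ge> 0" and k2: "k2 > 0"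
    and sym: "\<forall>i<N. \<forall>j<N. thinf i j = thinf j i"
    and diag: "\<forall>i<N. thinf i i = 0"
    and ode: "\<forall>i<N. \<forall>t\<ge>0.
        ((th i) has_real_derivative w i t) (at t within {0..}) \<and>
        ((w i) has_real_derivative
           ((1 / real N) * (\<Sum>j<N. (k0 * cos (th j t - th i t) + k1) * (w j t - w i t))
            + (k2 / real N) * (\<Sum>j<N. (\<bar>th j t - th i t\<bar> - thinf i j) * sgn (th j t - th i t))))
          (at t within {0..})"
    and smooth: "\<forall>i<N. smooth_on {0<..} (th i) \<and> smooth_on {0<..} (w i)"
    and initS: "in_S N (U_const N k2 thinf (tot_energy N k2 thinf (\<lambda>i. th i 0) (\<lambda>i. w i 0)))
                  (\<lambda>i. th i 0)"
    and E0: "tot_energy N k2 thinf (\<lambda>i. th i 0) (\<lambda>i. w i 0)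
               < k2 * (min_offdiag N thinf)\<^sup>2 / (2 * real N)"
    and coup: "k0 * cos (U_const N k2 thinf (tot_energy N k2 thinf (\<lambda>i. th i 0) (\<lambda>i. w i 0))) + k1 > 0"
    and sum0: "(\<Sum>i<N. w i 0) = 0"
  shows "\<exists>Einf \<ge> 0.
           ((\<lambda>t. kin_energy N (\<lambda>i. w i t)) \<longlongrightarrow> 0) at_top \<and>
           ((\<lambda>t. pot_energy N k2 thinf (\<lambda>i. th i t)) \<longlongrightarrow> Einf) at_top \<and>
           ((\<lambda>t. tot_energy N k2 thinf (\<lambda>i. th i t) (\<lambda>i. w i t)) \<longlongrightarrow> Einf) at_top"
proof -
  have Upi: "U_const N k2 thinf (tot_energy N k2 thinf (\<lambda>i. th i 0) (\<lambda>i. w i 0)) < pi"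
    using initS[unfolded in_S_def, rule_format, of 0 0] N2 by simp
  have K: "kur N k0 k1 k2 thinf th w"
    by (rule kur.intro) (fact N2 k0 k1 k2 sym diag ode E0 coup sum0 Upi)+
  show ?thesis by (rule kur.final[OF K])
qed

end
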